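(* Let $\mathcal{A}$ be a normed algebra that possesses an approximate identity, and let $x\in\mathcal{A}$. Then the right principal ideal $x\mathcal{A}=\{xa: a\in\mathcal{A}\}$ is dense in $\mathcal{A}$ if and only if $x$ is approximately right invertible in $\mathcal{A}$.
   Context: An approximate identity in a normed algebra $\mathcal{A}$ is a net $(e_j)_{j\in J}$ in $\mathcal{A}$ such that $\lim_{j} e_j y=\lim_j y e_j=y$ for every $y\in\mathcal{A}$ (convergence in norm). An element $x\in\mathcal{A}$ is approximately right invertible if there is a net $(r_j)_{j\in J}$ in $\mathcal{A}$ such that $(xr_j)_{j\in J}$ is an approximate identity in $\mathcal{A}$; it is approximately left invertible if there is a net $(l_j)_{j\in J}$ in $\mathcal{A}$ such that $(l_jx)_{j\in J}$ is an approximate identity in $\mathcal{A}$. *)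

theory Defs
  imports "HOL-Analysis.Analysis"
begin

text \<open>Nets are rendered as filters: a net \<open>(e_j)\<close> over a directed set \<open>J\<close> is a function
  \<open>e :: 'j \<Rightarrow> 'a\<close> together with the (proper) section filter \<open>F\<close> of \<open>J\<close>.
  We take the index type to be the algebra itself: this loses nothing, since any net
  may be replaced by its image filter (filtermap) on the algebra.\<close>

definition approx_identity_net :: "('j \<Rightarrow> 'a::real_normed_algebra) \<Rightarrow> 'j filter \<Rightarrow> bool" where
  "approx_identity_net e F \<longleftrightarrow> F \<noteq> bot \<and>
     (\<forall>y. ((\<lambda>j. e j * y) \<longlongrightarrow> y) F \<and> ((\<lambda>j. y * e j) \<longlongrightarrow> y) F)"

definition has_approx_identity :: "'a::real_normed_algebra itself \<Rightarrow> bool" where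
  "has_approx_identity _ \<longleftrightarrow> (\<exists>(e :: 'a \<Rightarrow> 'a) F. approx_identity_net e F)"

definition approx_right_invertible :: "'a::real_normed_algebra \<Rightarrow> bool" where
  "approx_right_invertible x \<longleftrightarrow>
     (\<exists>(r :: 'a \<Rightarrow> 'a) F. approx_identity_net (\<lambda>j. x * r j) F)"

end

theory Submission
  imports Defs
begin

theorem theorem2p7:
  fixes x :: "'a::real_normed_algebra"
  assumes "has_approx_identity TYPE('a)"
  shows "closure {x * a | a. True} = UNIV \<longleftrightarrow> approx_right_invertible x"
proof
  assume dense: "closure {x * a | a. True} = UNIV"
  from assms obtain e :: "'a \<Rightarrow> 'a" and F where eF: "approx_identity_net e F"
    unfolding has_approx_identity_def by blast
  have ex: "\<exists>a. dist (x * a) (e j) < 1 / real (Suc n)" for j n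
  proof -
    have "e j \<in> closure {x * a | a. True}" using dense by simp
    then obtain y where "y \<in> {x * a | a. True}" "dist y (e j) < 1 / real (Suc n)"
      unfolding closure_approachable by (meson divide_pos_pos of_nat_0_less_iff zero_less_Suc zero_less_one)
    thus ?thesis by blast
  qed
  define s where "s p = (SOME a. dist (x * a) (e (fst p)) < 1 / real (Suc (snd p)))" for p :: "'a \<times> nat"
  have s: "dist (x * s p) (e (fst p)) < 1 / real (Suc (snd p))" for p
    unfolding s_def by (rule someI_ex, rule ex)
  define P where "P = F \<times>\<^sub>F sequentially"
  define G where "G = filtermap (\<lambda>p. x * s p) P"
  define r where "r z = (SOME a. z = x * a)" for z
  have rz: "x * r (x * s p) = x * s p" for p
    unfolding r_def by (rule someI_ex[where P="\<lambda>a. x * s p = x * a", symmetric]) blast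
  have Fnb: "F \<noteq> bot" using eF unfolding approx_identity_net_def by blast
  have Pnb: "P \<noteq> bot" unfolding P_def prod_filter_eq_bot using Fnb by simp
  have g0: "((\<lambda>p. norm y * (1 / real (Suc (snd p)))) \<longlongrightarrow> 0) P" for y :: 'a
  proof -
    have "((\<lambda>n. 1 / real (Suc n)) \<longlongrightarrow> 0) sequentially"
      using LIMSEQ_Suc[OF lim_1_over_n] by simp
    hence "((\<lambda>p. 1 / real (Suc (snd p))) \<longlongrightarrow> 0) P"
      unfolding P_def by (rule tendsto_compose_filtermap[THEN iffD1, rotated] filterlim_compose[OF _ filterlim_snd])
    thus ?thesis using tendsto_mult_right_zero by blast
  qed
  have L: "((\<lambda>p. x * s p * y) \<longlongrightarrow> y) P \<and> ((\<lambda>p. y * (x * s p)) \<longlongrightarrow> y) P" for y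
  proof
    have "((\<lambda>j. e j * y) \<longlongrightarrow> y) F"
      using eF unfolding approx_identity_net_def by blast
    from filterlim_compose[OF this filterlim_fst, of sequentially]
    have e1: "((\<lambda>p. e (fst p) * y) \<longlongrightarrow> y) P" unfolding P_def by simp
    have d1: "((\<lambda>p. x * s p * y - e (fst p) * y) \<longlongrightarrow> 0) P"
    proof (rule Lim_null_comparison[OF _ g0[of y]], rule always_eventually, rule allI)
      fix p
      have "norm (x * s p * y - e (fst p) * y) = norm ((x * s p - e (fst p)) * y)"
        by (simp add: algebra_simps)
      also have "\<dots> \<le> norm (x * s p - e (fst p)) * norm y" by (rule norm_mult_ineq)
      also have "\<dots> \<le> (1 / real (Suc (snd p))) * norm y"
        using s[of p] by (intro mult_right_mono) (auto simp: dist_norm)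
      finally show "norm (x * s p * y - e (fst p) * y) \<le> norm y * (1 / real (Suc (snd p)))"
        by (simp add: mult.commute)
    qed
    show "((\<lambda>p. x * s p * y) \<longlongrightarrow> y) P"
      using tendsto_add[OF d1 e1] by simp
  next
    have "((\<lambda>j. y * e j) \<longlongrightarrow> y) F"
      using eF unfolding approx_identity_net_def by blast
    from filterlim_compose[OF this filterlim_fst, of sequentially]
    have e1: "((\<lambda>p. y * e (fst p)) \<longlongrightarrow> y) P" unfolding P_def by simp
    have d1: "((\<lambda>p. y * (x * s p) - y * e (fst p)) \<longlongrightarrow> 0) P"
    proof (rule Lim_null_comparison[OF _ g0[of y]], rule always_eventually, rule allI)
      fix p
      have "norm (y * (x * s p) - y * e (fst p)) = norm (y * (x * s p - e (fst p)))"
        by (simp add: algebra_simps)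
      also have "\<dots> \<le> norm y * norm (x * s p - e (fst p))" by (rule norm_mult_ineq)
      also have "\<dots> \<le> norm y * (1 / real (Suc (snd p)))"
        using s[of p] by (intro mult_left_mono) (auto simp: dist_norm)
      finally show "norm (y * (x * s p) - y * e (fst p)) \<le> norm y * (1 / real (Suc (snd p)))" .
    qed
    show "((\<lambda>p. y * (x * s p)) \<longlongrightarrow> y) P"
      using tendsto_add[OF d1 e1] by simp
  qed
  have "approx_identity_net (\<lambda>z. x * r z) G"
    unfolding approx_identity_net_def
  proof (intro conjI allI)
    show "G \<noteq> bot" unfolding G_def using Pnb by (simp add: filtermap_bot_iff)
  next
    fix y
    show "((\<lambda>z. x * r z * y) \<longlongrightarrow> y) G"
      unfolding G_def filterlim_filtermap o_def using L[of y] by (simp add: rz)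
    show "((\<lambda>z. y * (x * r z)) \<longlongrightarrow> y) G"
      unfolding G_def filterlim_filtermap o_def using L[of y] by (simp add: rz)
  qed
  thus "approx_right_invertible x" unfolding approx_right_invertible_def by blast
next
  assume "approx_right_invertible x"
  then obtain r :: "'a \<Rightarrow> 'a" and F where rF: "approx_identity_net (\<lambda>j. x * r j) F"
    unfolding approx_right_invertible_def by blast
  have "y \<in> closure {x * a | a. True}" for y
  proof (rule Lim_in_closed_set[of _ "\<lambda>j. x * r j * y" F])
    show "\<forall>\<^sub>F j in F. x * r j * y \<in> closure {x * a | a. True}"
      by (intro always_eventually allI closure_subset[THEN subsetD]) (auto simp: mult.assoc)
  qed (use rF in \<open>auto simp: approx_identity_net_def\<close>)
  thus "closure {x * a | a. True} = UNIV" by blast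
qed

end
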